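(* Let $1<\beta<2$, $N\ge5$, $h=(b-a)/N$, let $\gamma\in\mathbb R$ and $D_+,D_-\ge0$ with $D_++D_->0$. Then there is a constant $c>0$ independent of $h$ (one may take $c=c_1(D_++D_-)$ with $c_1$ independent of $h$) such that for every $\bm v\in V_h$ \[ (\delta^{\beta}_h\bm v,\bm v)\le -c\ln 2\,\|\bm v\|^2 . \]
   Context: Let $a<b$, $N$ a positive integer, $h=(b-a)/N$, grid $x_i=a+ih$. $V_h$ is the space of real grid functions $\bm v=(v_0,\dots,v_N)$ with $v_0=v_N=0$; $(\bm u,\bm v)=h\sum_{i=1}^{N-1}u_iv_i$, $\|\bm u\|=\sqrt{(\bm u,\bm u)}$. For $1<\beta<2$: $g^{(\beta)}_k=(-1)^k\binom{\beta}{k}$, $\lambda_1=\frac{\beta^2+3\beta+2}{12}$, $\lambda_0=\frac{4-\beta^2}{6}$, $\lambda_{-1}=\frac{\beta^2-3\beta+2}{12}$, $\omega^{(\beta)}_0=\lambda_1g^{(\beta)}_0$, $\omega^{(\beta)}_1=\lambda_1g^{(\beta)}_1+\lambda_0g^{(\beta)}_0$, $\omega^{(\beta)}_k=\lambda_1g^{(\beta)}_k+\lambda_0g^{(\beta)}_{k-1}+\lambda_{-1}g^{(\beta)}_{k-2}$ ($k\ge2$). For $\bm v\in V_h$, $1\le i\le N-1$: $(\delta^\beta_h\bm v)_i=\gamma\frac{v_{i+1}-v_{i-1}}{2h}+\frac{D_+}{h^\beta}\sum_{k=0}^{i+1}\omega^{(\beta)}_kv_{i-k+1}+\frac{D_-}{h^\beta}\sum_{k=0}^{N-i+1}\omega^{(\beta)}_kv_{i+k-1}$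 (entries with index $0$ or $N$ are zero), and $(\delta^\beta_h\bm v,\bm v)=h\sum_{i=1}^{N-1}(\delta^\beta_h\bm v)_iv_i$. *)

theory Defs
  imports Complex_Main
begin

definition gw :: "real \<Rightarrow> nat \<Rightarrow> real" where
  "gw \<beta> k = (-1) ^ k * (\<beta> gchoose k)"

definition lam1 :: "real \<Rightarrow> real" where "lam1 \<beta> = (\<beta>^2 + 3*\<beta> + 2) / 12"
definition lam0 :: "real \<Rightarrow> real" where "lam0 \<beta> = (4 - \<beta>^2) / 6"
definition lamm1 :: "real \<Rightarrow> real" where "lamm1 \<beta> = (\<beta>^2 - 3*\<beta> + 2) / 12"

definition omega :: "real \<Rightarrow> nat \<Rightarrow> real" where
  "omega \<beta> k =
     (if k = 0 then lam1 \<beta> * gw \<beta> 0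
      else if k = 1 then lam1 \<beta> * gw \<beta> 1 + lam0 \<beta> * gw \<beta> 0
      else lam1 \<beta> * gw \<beta> k + lam0 \<beta> * gw \<beta> (k - 1) + lamm1 \<beta> * gw \<beta> (k - 2))"

definition mesh :: "real \<Rightarrow> real \<Rightarrow> nat \<Rightarrow> real" where
  "mesh a b N = (b - a) / real N"

(* grid functions are nat \<Rightarrow> real; V_h = those with v 0 = 0 and v N = 0 (only v 0..v N matter) *)
definition in_Vh :: "nat \<Rightarrow> (nat \<Rightarrow> real) \<Rightarrow> bool" where
  "in_Vh N v \<longleftrightarrow> v 0 = 0 \<and> v N = 0"

definition grid_ip :: "real \<Rightarrow> real \<Rightarrow> nat \<Rightarrow> (nat \<Rightarrow> real) \<Rightarrow> (nat \<Rightarrow> real) \<Rightarrow> real" where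
  "grid_ip a b N u v = mesh a b N * (\<Sum>i = 1..N - 1. u i * v i)"

definition grid_norm :: "real \<Rightarrow> real \<Rightarrow> nat \<Rightarrow> (nat \<Rightarrow> real) \<Rightarrow> real" where
  "grid_norm a b N v = sqrt (grid_ip a b N v v)"

(* (\<delta>^\<beta>_h v)_i for 1 \<le> i \<le> N-1 *)
definition delta_h :: "real \<Rightarrow> real \<Rightarrow> real \<Rightarrow> real \<Rightarrow> real \<Rightarrow> real \<Rightarrow> nat \<Rightarrow> (nat \<Rightarrow> real) \<Rightarrow> nat \<Rightarrow> real" where
  "delta_h \<beta> \<gamma> Dp Dm a b N v i =
     (let h = mesh a b N in
      \<gamma> * (v (i + 1) - v (i - 1)) / (2 * h)
      + Dp / h powr \<beta> * (\<Sum>k = 0..i + 1. omega \<beta> k * v (i + 1 - k))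
      + Dm / h powr \<beta> * (\<Sum>k = 0..N - i + 1. omega \<beta> k * v (i + k - 1)))"

end

theory Submission
  imports Defs "HOL-Analysis.Convex"
begin

lemma gw_0[simp]: "gw b 0 = 1" by (simp add: gw_def)

lemma gw_Suc: "gw b (Suc k) = gw b k * (real k - b) / (real k + 1)"
proof -
  have "b * (b gchoose k) = of_nat k * (b gchoose k) + of_nat (Suc k) * (b gchoose (Suc k))"
    by (rule gbinomial_mult_1)
  hence h: "(b gchoose Suc k) = (b gchoose k) * (b - real k) / (real k + 1)"
    by (simp add: field_simps)
  show ?thesis unfolding gw_def h by (simp add: field_simps)
qed

lemma gw_1: "gw b 1 = - b" using gw_Suc[of b 0] by simp
lemma gw_2: "gw b 2 = b * (b - 1) / 2" using gw_Suc[of b 1] gw_1[of b]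
  by (simp add: numeral_2_eq_2 field_simps)

lemma gw_pos: assumes "1 < b" "b < 2" "k \<ge> 2" shows "gw b k > 0"
  using assms(3)
proof (induction k rule: dec_induct)
  case base then show ?case using assms by (simp add: gw_2)
next
  case (step n)
  then show ?case using assms by (simp add: gw_Suc)
qed

definition GG :: "real \<Rightarrow> nat \<Rightarrow> real" where "GG b n = (\<Sum>k=0..n. gw b k)"

lemma GG_closed: assumes "b \<noteq> 0" shows "GG b n = gw b n * (b - real n) / b"
proof (induction n)
  case 0 then show ?case using assms by (simp add: GG_def)
next
  case (Suc n)
  have "GG b (Suc n) = GG b n + gw b (Suc n)" by (simp add: GG_def)
  also have "\<dots> = gw b (Suc n) * (b - real (Suc n)) / b"
    unfolding Suc.IH gw_Suc using assms by (simp add: field_simps)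
  finally show ?case .
qed

lemma GG_Suc: assumes "b \<noteq> 0" shows "GG b (Suc n) = GG b n * (real n + 1 - b) / (real n + 1)"
  using assms by (simp add: GG_closed gw_Suc field_simps)

lemma GG_0[simp]: "GG b 0 = 1" by (simp add: GG_def)
lemma GG_Suc0: "b \<noteq> 0 \<Longrightarrow> GG b (Suc 0) = 1 - b" using GG_Suc[of b 0] by simp
lemma GG_1: "b \<noteq> 0 \<Longrightarrow> GG b 1 = 1 - b" using GG_Suc0 by simp
lemma GG_2: "b \<noteq> 0 \<Longrightarrow> GG b 2 = (1 - b) * (2 - b) / 2"
proof -
  assume "b \<noteq> 0"
  hence "GG b (Suc (Suc 0)) = (1 - b) * (2 - b) / 2"
    using GG_Suc[of b "Suc 0"] GG_Suc0[of b] by (simp add: field_simps)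
  thus ?thesis by (simp add: numeral_2_eq_2)
qed

lemma GG_neg: assumes "1 < b" "b < 2" "n \<ge> 1" shows "GG b n < 0"
  using assms(3)
proof (induction n rule: dec_induct)
  case base then show ?case using assms GG_Suc[of b 0] by simp
next
  case (step n)
  have "real n + 1 - b > 0" using step assms by simp
  hence "GG b n * (real n + 1 - b) < 0" using step mult_neg_pos by blast
  hence "GG b n * (real n + 1 - b) / (real n + 1) < 0" by (simp add: divide_neg_pos)
  then show ?case using assms by (simp add: GG_Suc)
qed

lemma key_powr: assumes "1 < b" "b < 2" "n \<ge> 2"
  shows "(real n - 1) powr b \<le> real n powr b * (real n + 1 - b) / (real n + 1)"
proof -
  define x where "x = (real n - 1) / real n"
  have n0: "real n > 0" "real n \<ge> 2" using assms by auto
  have x0: "x > 0" using assms by (simp add: x_def)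
  have "(real n - 1) powr b = x powr b * real n powr b"
    using n0 by (simp add: x_def powr_divide)
  moreover have "x powr b = x * x powr (b - 1)"
    using x0 by (simp add: powr_mult_base)
  moreover have "x powr (b - 1) * 1 powr (2 - b) \<le> (b - 1) * x + (2 - b) * 1"
    by (rule Youngs_inequality_0) (use assms x0 in auto)
  hence "x powr (b - 1) \<le> (b - 1) * x + (2 - b)" by simp
  hence "x * x powr (b - 1) \<le> x * ((b - 1) * x + (2 - b))"
    using x0 by (simp add: mult_left_mono)
  ultimately have "(real n - 1) powr b \<le> x * ((b - 1) * x + (2 - b)) * real n powr b"
    by (simp add: mult_right_mono)
  also have "x * ((b - 1) * x + (2 - b)) = (real n - 1) * (real n + 1 - b) / (real n)^2"
    using n0 by (simp add: x_def field_simps power2_eq_square)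
  also have "\<dots> \<le> (real n + 1 - b) / (real n + 1)"
  proof -
    have "(real n - 1) * (real n + 1) \<le> (real n)^2" by (simp add: power2_eq_square algebra_simps)
    hence "(real n - 1) * (real n + 1 - b) * (real n + 1) \<le> (real n + 1 - b) * (real n)^2"
      using assms n0 by (smt (verit) mult.commute mult_left_mono mult.assoc)
    thus ?thesis using n0 by (simp add: field_simps)
  qed
  finally show ?thesis
    using n0 by (smt (verit) mult.commute mult_right_mono powr_ge_zero times_divide_eq_right)
qed



definition Qs :: "real \<Rightarrow> nat \<Rightarrow> real" where "Qs b m = (\<Sum>k=0..m. omega b k)"

lemma GG_SucS: "GG b (Suc n) = GG b n + gw b (Suc n)" by (simp add: GG_def)

lemma omega_SSS: "omega b (Suc (Suc k)) = lam1 b * gw b (Suc (Suc k)) + lam0 b * gw b (Suc k) + lamm1 b * gw b k"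
  by (simp add: omega_def)

lemma Qs_closed: "Qs b (Suc (Suc n)) = lam1 b * GG b (Suc (Suc n)) + lam0 b * GG b (Suc n) + lamm1 b * GG b n"
proof (induction n)
  case 0
  show ?case by (simp add: Qs_def GG_def omega_def algebra_simps)
next
  case (Suc n)
  have "Qs b (Suc (Suc (Suc n))) = Qs b (Suc (Suc n)) + omega b (Suc (Suc (Suc n)))"
    by (simp add: Qs_def)
  also have "\<dots> = lam1 b * GG b (Suc (Suc (Suc n))) + lam0 b * GG b (Suc (Suc n)) + lamm1 b * GG b (Suc n)"
    unfolding Suc.IH omega_SSS GG_SucS[of b "Suc (Suc n)"] GG_SucS[of b "Suc n"] GG_SucS[of b n]
    by (simp add: algebra_simps)
  finally show ?case .
qed

definition EE :: "real \<Rightarrow> nat \<Rightarrow> real" where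
  "EE b n = lam1 b * (real n + 1 - b) * (real n + 2 - b) / ((real n + 1) * (real n + 2))
          + lam0 b * (real n + 1 - b) / (real n + 1) + lamm1 b"

lemma Qs_EE: assumes "b \<noteq> 0" shows "Qs b (Suc (Suc n)) = GG b n * EE b n"
proof -
  have h1: "GG b (Suc n) = GG b n * (real n + 1 - b) / (real n + 1)" using GG_Suc[OF assms] .
  have h2: "GG b (Suc (Suc n)) = GG b n * (real n + 1 - b) / (real n + 1) * (real n + 2 - b) / (real n + 2)"
    using GG_Suc[OF assms, of "Suc n"] GG_Suc[OF assms, of n] by (simp add: add_ac)
  show ?thesis unfolding Qs_closed EE_def h2 h1 by (simp add: field_simps)
qed

definition AA :: "real \<Rightarrow> real" where "AA b = (2 - b) * (36 + b - 6 * b^2 - b^3)"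
definition BB :: "real \<Rightarrow> real" where "BB b = 60 - 6 * b^2 - 12 * b"

lemma frac3: fixes x P Q C :: real assumes "x + 1 \<noteq> 0" "x + 2 \<noteq> 0"
  shows "(x + 1) * (x + 2) * (P / ((x + 1) * (x + 2)) + Q / (x + 1) + C) = P + Q * (x + 2) + C * ((x + 1) * (x + 2))"
proof -
  have 1: "(x + 1) * (x + 2) * (P / ((x + 1) * (x + 2))) = P" using assms by simp
  have 2: "(x + 1) * (x + 2) * (Q / (x + 1)) = Q * (x + 2)" using assms by simp
  have "(x + 1) * (x + 2) * (P / ((x + 1) * (x + 2)) + Q / (x + 1) + C) =
    (x + 1) * (x + 2) * (P / ((x + 1) * (x + 2))) + (x + 1) * (x + 2) * (Q / (x + 1)) + (x + 1) * (x + 2) * C"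
    by (simp only: distrib_left)
  also have "\<dots> = P + Q * (x + 2) + C * ((x + 1) * (x + 2))" unfolding 1 2 by simp
  finally show ?thesis .
qed

lemma EE_poly: "12 * ((real n + 1) * (real n + 2)) * EE b n
   = AA b + BB b * (real n - 1) + 12 * (real n - 1)^2"
proof -
  have "(real n + 1) * (real n + 2) * EE b n = lam1 b * (real n + 1 - b) * (real n + 2 - b)
     + lam0 b * (real n + 1 - b) * (real n + 2) + lamm1 b * ((real n + 1) * (real n + 2))"
    unfolding EE_def by (rule frac3) auto
  hence "12 * ((real n + 1) * (real n + 2)) * EE b n = 12 * (lam1 b * (real n + 1 - b) * (real n + 2 - b)
     + lam0 b * (real n + 1 - b) * (real n + 2) + lamm1 b * ((real n + 1) * (real n + 2)))"
    by simp
  thus ?thesis unfolding lam1_def lam0_def lamm1_def AA_def BB_def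
    by (simp add: field_simps power2_eq_square power3_eq_cube)
qed

lemma b_facts: fixes b :: real assumes "1 < b" "b < 2" shows "b^2 < 4" "b^3 < 8" "b^2 > 1" "b^3 > 1"
proof -
  have "b * b < 2 * 2" using assms by (intro mult_strict_mono) auto
  thus "b^2 < 4" by (simp add: power2_eq_square)
  have "1 * 1 < b * b" using assms by (intro mult_strict_mono) auto
  thus "b^2 > 1" by (simp add: power2_eq_square)
  have "b * (b * b) < 2 * 4" using \<open>b * b < 2 * 2\<close> assms by (intro mult_strict_mono) auto
  thus "b^3 < 8" by (simp add: power3_eq_cube)
  have "1 * 1 < b * (b * b)" using \<open>1 * 1 < b * b\<close> assms by (intro mult_strict_mono) auto
  thus "b^3 > 1" by (simp add: power3_eq_cube)
qed

lemma AA_pos: assumes "1 < b" "b < 2" shows "AA b > 0"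
proof -
  have "36 + b - 6 * b^2 - b^3 > 0" using b_facts[OF assms] assms by linarith
  thus ?thesis unfolding AA_def using assms by simp
qed

lemma BB_pos: assumes "1 < b" "b < 2" shows "BB b > 0"
  unfolding BB_def using b_facts[OF assms] assms by linarith

definition eps :: "real \<Rightarrow> real" where "eps b = min (AA b / 72) (min (BB b / 60) 1)"

lemma eps_pos: "1 < b \<Longrightarrow> b < 2 \<Longrightarrow> eps b > 0"
  using AA_pos BB_pos by (simp add: eps_def)

lemma EE_lower: assumes "1 < b" "b < 2" "n \<ge> 1" shows "EE b n \<ge> eps b"
proof -
  define t where "t = real n - 1"
  have t0: "t \<ge> 0" using assms by (simp add: t_def)
  have D: "12 * ((real n + 1) * (real n + 2)) = 72 + 60 * t + 12 * t^2"
    by (simp add: t_def algebra_simps power2_eq_square)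
  have e1: "eps b * 72 \<le> AA b" by (simp add: eps_def)
  have e2: "eps b * 60 \<le> BB b" by (simp add: eps_def)
  have e3: "eps b \<le> 1" by (simp add: eps_def)
  have "eps b * (60 * t) \<le> BB b * t" using e2 t0 by (metis mult.assoc mult.commute mult_right_mono)
  moreover have "eps b * (12 * t^2) \<le> 1 * (12 * t^2)" using e3 by (intro mult_right_mono) auto
  ultimately have "eps b * (72 + 60 * t + 12 * t^2) \<le> AA b + BB b * t + 12 * t^2"
    using e1 by (simp add: distrib_left)
  moreover have "12 * ((real n + 1) * (real n + 2)) * EE b n = AA b + BB b * t + 12 * t^2"
    using EE_poly[of n b] by (simp add: t_def)
  ultimately have "eps b * (12 * ((real n + 1) * (real n + 2))) \<le> 12 * ((real n + 1) * (real n + 2)) * EE b n"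
    using D by simp
  moreover have "12 * ((real n + 1) * (real n + 2)) > 0" by simp
  ultimately show ?thesis by (simp add: mult.commute)
qed

lemma EE0_neg: assumes "1 < b" "b < 2" shows "EE b 0 < 0"
proof -
  have "24 * EE b 0 = AA b - BB b + 12" using EE_poly[of 0 b] by simp
  also have "\<dots> = (b - 1) * (b - 2) * ((b + 3) * (b + 4))"
    unfolding AA_def BB_def by (simp add: algebra_simps power2_eq_square power3_eq_cube)
  also have "\<dots> < 0" using assms by (simp add: mult_neg_pos mult_pos_neg)
  finally show ?thesis by simp
qed

definition g2 :: "real \<Rightarrow> real" where "g2 b = (b - 1) * (2 - b) / 2"

lemma cross: fixes N P f :: real assumes "N > 0" "P > 0" "P \<le> N * f" shows "1 / N \<le> f / P"
  using assms by (simp add: field_simps)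

lemma GG_lower2: assumes "1 < b" "b < 2" "n \<ge> 2"
  shows "- GG b n \<ge> g2 b / (real n - 1) powr b"
  using assms(3)
proof (induction n rule: dec_induct)
  case base
  have e: "(1 - b) * (2 - b) = - ((b - 1) * (2 - b))" by (simp add: algebra_simps)
  have "- GG b 2 = g2 b" using assms by (simp add: GG_2 g2_def e)
  then show ?case by simp
next
  case (step n)
  have n2: "real n \<ge> 2" using step by simp
  have kp: "(real n - 1) powr b \<le> real n powr b * (real n + 1 - b) / (real n + 1)"
    by (rule key_powr) (use assms step in auto)
  have pos1: "(real n - 1) powr b > 0" using n2 by simp
  have pos2: "real n powr b > 0" using n2 by simp
  have f: "(real n + 1 - b) / (real n + 1) > 0" using n2 assms by simp
  have g2p: "g2 b \<ge> 0" using assms by (simp add: g2_def)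
  define f where "f = (real n + 1 - b) / (real n + 1)"
  have c: "1 / real n powr b \<le> f / (real n - 1) powr b"
    by (rule cross) (use kp pos1 pos2 in \<open>auto simp: f_def\<close>)
  have "g2 b * (1 / real n powr b) \<le> g2 b * (f / (real n - 1) powr b)"
    using c g2p by (rule mult_left_mono)
  hence "g2 b / real n powr b \<le> g2 b / (real n - 1) powr b * f" by simp
  also have "\<dots> \<le> - GG b n * f"
    by (rule mult_right_mono[OF step.IH]) (use f in \<open>simp add: f_def\<close>)
  also have "\<dots> = - GG b (Suc n)" using assms by (simp add: GG_Suc f_def)
  finally show ?case by simp
qed
lemma GG_lower: assumes "1 < b" "b < 2" "n \<ge> 1"
  shows "- GG b n \<ge> g2 b / real n powr b"
proof (cases "n = 1")
  case True
  then show ?thesis using assms by (simp add: GG_Suc0 g2_def field_simps)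
next
  case False
  hence n2: "n \<ge> 2" using assms by simp
  have g2p: "g2 b \<ge> 0" using assms by (simp add: g2_def)
  have "(real n - 1) powr b \<le> real n powr b" using n2 assms by (intro powr_mono2) auto
  hence "g2 b / real n powr b \<le> g2 b / (real n - 1) powr b"
    using g2p n2 by (intro divide_left_mono) auto
  also have "\<dots> \<le> - GG b n" by (rule GG_lower2) (use assms n2 in auto)
  finally show ?thesis .
qed

definition kap :: "real \<Rightarrow> real" where "kap b = min (- EE b 0) (eps b * g2 b)"

lemma kap_pos: "1 < b \<Longrightarrow> b < 2 \<Longrightarrow> kap b > 0"
  using EE0_neg eps_pos by (simp add: kap_def g2_def)

lemma Qs_upper: assumes "1 < b" "b < 2" "m \<ge> 2"
  shows "Qs b m \<le> - kap b / real m powr b"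
proof -
  obtain n where m: "m = Suc (Suc n)" using assms(3) by (metis add_2_eq_Suc le_Suc_ex)
  have b0: "b \<noteq> 0" using assms by simp
  have kp: "kap b > 0" using kap_pos assms by simp
  have mp: "real m powr b \<ge> 1" using assms by (simp add: ge_one_powr_ge_zero)
  show ?thesis
  proof (cases "n = 0")
    case True
    have "kap b / real m powr b \<le> kap b" using kp mp by (simp add: divide_le_eq)
    also have "\<dots> \<le> - EE b 0" by (simp add: kap_def)
    finally show ?thesis using True m Qs_EE[OF b0, of 0] by simp
  next
    case False
    hence n1: "n \<ge> 1" by simp
    have Gn: "GG b n < 0" using GG_neg assms n1 by simp
    have "Qs b m = GG b n * EE b n" using m Qs_EE[OF b0] by simp
    also have "\<dots> \<le> GG b n * eps b" using Gn EE_lower[OF assms(1,2) n1] by (simp add: mult_left_mono_neg)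
    also have "\<dots> \<le> - (g2 b / real n powr b) * eps b"
    proof -
      have "GG b n \<le> - (g2 b / real n powr b)" using GG_lower[OF assms(1,2) n1] by linarith
      thus ?thesis by (rule mult_right_mono) (use eps_pos[OF assms(1,2)] in auto)
    qed
    also have "\<dots> \<le> - kap b / real n powr b"
    proof -
      have "kap b \<le> eps b * g2 b" by (simp add: kap_def)
      hence "kap b / real n powr b \<le> eps b * g2 b / real n powr b"
        using n1 by (simp add: divide_right_mono)
      thus ?thesis by (simp add: mult.commute)
    qed
    also have "\<dots> \<le> - kap b / real m powr b"
    proof -
      have "real n powr b \<le> real m powr b" using m assms by (intro powr_mono2) auto
      moreover have "real n powr b > 0" "real m powr b > 0" using n1 m by auto
      ultimately have "kap b / real m powr b \<le> kap b / real n powr b"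
        using kp by (intro divide_left_mono) auto
      thus ?thesis by simp
    qed
    finally show ?thesis .
  qed
qed

lemma gw_Suc0[simp]: "gw b (Suc 0) = - b" using gw_1 by simp
lemma gw_SS0[simp]: "gw b (Suc (Suc 0)) = b * (b - 1) / 2" using gw_2 by (simp add: numeral_2_eq_2)

lemma omega_0: "omega b 0 = lam1 b" by (simp add: omega_def)
lemma omega_0_pos: "1 < b \<Longrightarrow> omega b 0 > 0"
  by (simp add: omega_0 lam1_def add_pos_pos)

lemma omega_1: assumes "1 < b" "b < 2" shows "omega b 1 \<le> 0"
proof -
  have "omega b 1 = - ((b + 2) * (b + 4) * (b - 1)) / 12"
    by (simp add: omega_def gw_1 lam1_def lam0_def field_simps power2_eq_square)
  also have "\<dots> \<le> 0" using assms by simp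
  finally show ?thesis .
qed

lemma omega_02: assumes "1 < b" "b < 2" shows "omega b 0 + omega b 2 \<ge> 0"
proof -
  have "omega b 0 + omega b 2 = (b - 1) * (b^3 + 7 * b^2 + 10 * b - 8) / 24"
    by (simp add: omega_def gw_1 gw_2 lam1_def lam0_def lamm1_def field_simps power2_eq_square power3_eq_cube)
  also have "\<dots> \<ge> 0"
  proof -
    have "b^3 + 7 * b^2 + 10 * b - 8 > 0" using assms b_facts[OF assms] by linarith
    thus ?thesis using assms by simp
  qed
  finally show ?thesis .
qed

lemma omega_3: assumes "1 < b" "b < 2" shows "omega b 3 \<ge> 0"
proof -
  have g3: "gw b 3 = gw b 2 * (2 - b) / 3" using gw_Suc[of b 2] by simp
  have "omega b 3 = lam1 b * gw b 3 + lam0 b * gw b 2 + lamm1 b * gw b 1"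
    by (simp add: omega_def)
  also have "\<dots> \<ge> 0"
  proof -
    have "gw b 2 > 0" using gw_pos assms by simp
    hence "gw b 2 * (2 - b) / 3 \<ge> 0" using assms by simp
    hence "gw b 3 \<ge> 0" using g3 by linarith
    moreover have "lam1 b \<ge> 0" "lam0 b \<ge> 0" using assms b_facts[OF assms] by (simp_all add: lam1_def lam0_def)
    moreover have "lamm1 b * gw b 1 \<ge> 0"
    proof -
      have "lamm1 b = (b - 1) * (b - 2) / 12" by (simp add: lamm1_def algebra_simps power2_eq_square)
      moreover have "(b - 1) * (b - 2) < 0" using assms by (simp add: mult_pos_neg)
      ultimately have "lamm1 b \<le> 0" by simp
      thus ?thesis using assms by (simp add: gw_1 mult_nonpos_nonneg)
    qed
    ultimately show ?thesis using \<open>gw b 2 > 0\<close>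
      by (smt (verit) mult_nonneg_nonneg)
  qed
  finally show ?thesis .
qed

lemma omega_ge4: assumes "1 < b" "b < 2" shows "omega b (n + 4) \<ge> 0"
proof -
  have h3: "gw b (n + 3) = gw b (n + 2) * (real n + 2 - b) / (real n + 3)"
    using gw_Suc[of b "n + 2"] by (simp add: add_ac eval_nat_numeral)
  have h4: "gw b (n + 4) = gw b (n + 2) * ((real n + 2 - b) * (real n + 3 - b) / ((real n + 3) * (real n + 4)))"
    using gw_Suc[of b "n + 3"] h3 by (simp add: add_ac eval_nat_numeral)
  define F where "F = lam1 b * (real n + 2 - b) * (real n + 3 - b) / ((real n + 3) * (real n + 4))
     + lam0 b * (real n + 2 - b) / (real n + 3) + lamm1 b"
  have om: "omega b (n + 4) = gw b (n + 2) * F"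
  proof -
    have "omega b (n + 4) = lam1 b * gw b (n + 4) + lam0 b * gw b (n + 3) + lamm1 b * gw b (n + 2)"
      by (simp add: omega_def eval_nat_numeral)
    thus ?thesis unfolding h4 h3 F_def by (simp add: algebra_simps)
  qed
  have "(real (n + 2) + 1) * (real (n + 2) + 2) * F = lam1 b * (real n + 2 - b) * (real n + 3 - b)
     + lam0 b * (real n + 2 - b) * (real (n + 2) + 2) + lamm1 b * ((real (n + 2) + 1) * (real (n + 2) + 2))"
    unfolding F_def using frac3[of "real (n + 2)"] by (simp add: add_ac)
  hence "12 * ((real n + 3) * (real n + 4) * F) = (2 - b)^2 * (b + 5)^2 + real n * (72 - 6 * b^2 - 18 * b) + 12 * (real n)^2"
    unfolding lam1_def lam0_def lamm1_def by (simp add: field_simps power2_eq_square power3_eq_cube)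
  moreover have "(2 - b)^2 * (b + 5)^2 + real n * (72 - 6 * b^2 - 18 * b) + 12 * (real n)^2 \<ge> 0"
  proof -
    have "72 - 6 * b^2 - 18 * b \<ge> 0" using assms b_facts[OF assms] by linarith
    thus ?thesis by simp
  qed
  ultimately have "(real n + 3) * (real n + 4) * F \<ge> 0" by simp
  moreover have p: "(real n + 3) * (real n + 4) > 0" by simp
  ultimately have "(real n + 3) * (real n + 4) * F / ((real n + 3) * (real n + 4)) \<ge> 0"
    by (intro divide_nonneg_pos)
  hence "F \<ge> 0" using p by simp
  moreover have "gw b (n + 2) > 0" using gw_pos assms by simp
  ultimately show ?thesis unfolding om by simp
qed



definition wfm :: "real \<Rightarrow> nat \<Rightarrow> nat \<Rightarrow> real" where
  "wfm b i j = (if j \<le> i + 1 then omega b (i + 1 - j) else 0)"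

lemma sum_I: fixes g :: "nat \<Rightarrow> real" assumes "v 0 = 0" "v N = 0"
  shows "(\<Sum>j=0..N. g j * v j) = (\<Sum>j=1..N-1. g j * v j)"
proof (rule sum.mono_neutral_right)
  show "\<forall>j\<in>{0..N} - {1..N - 1}. g j * v j = 0"
  proof
    fix j assume "j \<in> {0..N} - {1..N - 1}"
    hence "j = 0 \<or> j = N" by auto
    thus "g j * v j = 0" using assms by auto
  qed
qed auto

lemma L_S1: assumes "v 0 = 0" "v N = 0" "1 \<le> i" "i \<le> N - 1"
  shows "(\<Sum>k=0..i+1. omega b k * v (i + 1 - k)) = (\<Sum>j=1..N-1. wfm b i j * v j)"
proof -
  have "(\<Sum>k=0..i+1. omega b k * v (i + 1 - k)) = (\<Sum>j=0..i+1. omega b (i + 1 - j) * v j)"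
    by (subst sum.atLeastAtMost_rev) (intro sum.cong, auto)
  also have "\<dots> = (\<Sum>j\<in>{j\<in>{0..N}. j \<le> i + 1}. omega b (i + 1 - j) * v j)"
    using assms by (intro sum.cong) auto
  also have "\<dots> = (\<Sum>j=0..N. wfm b i j * v j)"
    by (subst sum.inter_filter) (auto simp: wfm_def intro!: sum.cong)
  also have "\<dots> = (\<Sum>j=1..N-1. wfm b i j * v j)" by (rule sum_I) (use assms in auto)
  finally show ?thesis .
qed

lemma L_S2: assumes "v 0 = 0" "v N = 0" "1 \<le> i" "i \<le> N - 1"
  shows "(\<Sum>k=0..N-i+1. omega b k * v (i + k - 1)) = (\<Sum>j=1..N-1. wfm b j i * v j)"
proof -
  have "(\<Sum>k=0..N-i+1. omega b k * v (i + k - 1)) = (\<Sum>k=0..N-i+1. (\<lambda>j. omega b (j + 1 - i) * v j) (k + (i - 1)))"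
    using assms by (intro sum.cong) (auto simp: add.commute)
  also have "\<dots> = (\<Sum>j\<in>{0 + (i - 1)..(N - i + 1) + (i - 1)}. omega b (j + 1 - i) * v j)"
    by (rule sum.shift_bounds_cl_nat_ivl[symmetric])
  also have "\<dots> = (\<Sum>j\<in>{j\<in>{0..N}. i \<le> j + 1}. omega b (j + 1 - i) * v j)"
    using assms by (intro sum.cong) auto
  also have "\<dots> = (\<Sum>j=0..N. wfm b j i * v j)"
    by (subst sum.inter_filter) (auto simp: wfm_def intro!: sum.cong)
  also have "\<dots> = (\<Sum>j=1..N-1. wfm b j i * v j)" by (rule sum_I) (use assms in auto)
  finally show ?thesis .
qed

lemma telescope: fixes v :: "nat \<Rightarrow> real" assumes "v 0 = 0" "v N = 0" "N \<ge> 2"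
  shows "(\<Sum>i=1..N-1. (v (i + 1) - v (i - 1)) * v i) = 0"
proof -
  obtain M where M: "N = Suc M" "M \<ge> 1" using assms by (cases N) auto
  have 1: "(\<Sum>i=1..M. v (i + 1) * v i) = (\<Sum>i=0..M. v i * v (i + 1))"
    using assms M by (simp add: sum.atLeast_Suc_atMost mult.commute)
  have "(\<Sum>i=1..M. v (i - 1) * v i) = (\<Sum>i\<in>{0 + 1..(M - 1) + 1}. v (i - 1) * v i)"
    using M by simp
  also have "\<dots> = (\<Sum>i=0..M-1. v i * v (i + 1))"
    by (subst sum.shift_bounds_cl_nat_ivl) simp
  also have "\<dots> = (\<Sum>i=0..M. v i * v (i + 1))"
  proof -
    have "{0..M} = insert M {0..M-1}" using M by auto
    thus ?thesis using assms M by simp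
  qed
  finally have 2: "(\<Sum>i=1..M. v (i - 1) * v i) = (\<Sum>i=0..M. v i * v (i + 1))" .
  show ?thesis using 1 2 M by (simp add: left_diff_distrib sum_subtractf)
qed

lemma revs: fixes m :: nat shows "(\<Sum>j=1..m+1. f (m + 1 - j)) = (\<Sum>k=0..m. (f k :: real))"
  by (rule sum.reindex_bij_witness[where i="\<lambda>k. m + 1 - k" and j="\<lambda>j. m + 1 - j"]) auto

lemma R_sum: assumes "1 \<le> i" "i + 2 \<le> N"
  shows "(\<Sum>j=1..N-1. wfm b i j) = Qs b i"
proof -
  have "(\<Sum>j=1..N-1. wfm b i j) = (\<Sum>j\<in>{j\<in>{1..N-1}. j \<le> i + 1}. omega b (i + 1 - j))"
    by (subst sum.inter_filter) (auto simp: wfm_def intro!: sum.cong)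
  also have "\<dots> = (\<Sum>j=1..i+1. omega b (i + 1 - j))"
    using assms by (intro sum.cong) auto
  also have "\<dots> = Qs b i" unfolding Qs_def by (rule revs)
  finally show ?thesis .
qed

lemma R_last: assumes "N \<ge> 2"
  shows "(\<Sum>j=1..N-1. wfm b (N - 1) j) = Qs b (N - 1) - omega b 0"
proof -
  have "(\<Sum>j=1..N-1. wfm b (N - 1) j) = (\<Sum>j=1..N-1. omega b (N - 1 + 1 - j))"
    using assms by (intro sum.cong) (auto simp: wfm_def)
  moreover have "(\<Sum>j=1..N-1+1. omega b (N - 1 + 1 - j)) = (\<Sum>j=1..N-1. omega b (N - 1 + 1 - j)) + omega b 0"
  proof -
    obtain M where M: "N = Suc M" "M \<ge> 1" using assms by (cases N) auto
    show ?thesis using M by simp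
  qed
  moreover have "(\<Sum>j=1..N-1+1. omega b (N - 1 + 1 - j)) = Qs b (N - 1)"
    unfolding Qs_def by (rule revs)
  ultimately show ?thesis by simp
qed

lemma C_sum: assumes "2 \<le> i" "i + 1 \<le> N"
  shows "(\<Sum>j=1..N-1. wfm b j i) = Qs b (N - i)"
proof -
  have "(\<Sum>j=1..N-1. wfm b j i) = (\<Sum>j\<in>{j\<in>{1..N-1}. i \<le> j + 1}. omega b (j + 1 - i))"
    by (subst sum.inter_filter) (auto simp: wfm_def intro!: sum.cong)
  also have "\<dots> = (\<Sum>j\<in>{0 + (i - 1)..(N - i) + (i - 1)}. omega b (j + 1 - i))"
    using assms by (intro sum.cong) auto
  also have "\<dots> = (\<Sum>k=0..N-i. omega b (k + (i - 1) + 1 - i))"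
    by (rule sum.shift_bounds_cl_nat_ivl)
  also have "\<dots> = Qs b (N - i)" unfolding Qs_def using assms by (intro sum.cong) auto
  finally show ?thesis .
qed

lemma C_first: assumes "N \<ge> 2"
  shows "(\<Sum>j=1..N-1. wfm b j 1) = Qs b (N - 1) - omega b 0"
proof -
  have "(\<Sum>j=1..N-1. wfm b j 1) = (\<Sum>j=Suc 0..N-1. omega b j)"
    by (intro sum.cong) (auto simp: wfm_def)
  moreover have "Qs b (N - 1) = omega b 0 + (\<Sum>j=Suc 0..N-1. omega b j)"
    unfolding Qs_def by (simp add: sum.atLeast_Suc_atMost)
  ultimately show ?thesis by simp
qed

lemma quad: fixes w :: "nat \<Rightarrow> nat \<Rightarrow> real" and v :: "nat \<Rightarrow> real"
  assumes "finite I" "\<And>i j. i \<in> I \<Longrightarrow> j \<in> I \<Longrightarrow> i \<noteq> j \<Longrightarrow> w i j + w j i \<ge> 0"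
  shows "(\<Sum>i\<in>I. \<Sum>j\<in>I. w i j * v j * v i) \<le> (\<Sum>i\<in>I. (v i)^2 * ((\<Sum>j\<in>I. w i j) + (\<Sum>j\<in>I. w j i))) / 2"
proof -
  define W where "W = (\<Sum>i\<in>I. \<Sum>j\<in>I. w i j * v j * v i)"
  have sw: "(\<Sum>i\<in>I. \<Sum>j\<in>I. w j i * v j * v i) = W"
    unfolding W_def by (subst sum.swap) (simp add: mult_ac)
  have pt: "(w i j + w j i) * (v j * v i) \<le> (w i j + w j i) * ((v i)^2 + (v j)^2) / 2"
    if "i \<in> I" "j \<in> I" for i j
  proof (cases "i = j")
    case True then show ?thesis by (simp add: power2_eq_square)
  next
    case False
    have "0 \<le> (v i - v j)^2" by simp
    hence "v j * v i \<le> ((v i)^2 + (v j)^2) / 2" by (simp add: power2_eq_square algebra_simps)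
    hence "(w i j + w j i) * (v j * v i) \<le> (w i j + w j i) * (((v i)^2 + (v j)^2) / 2)"
      using assms(2)[OF that False] by (rule mult_left_mono)
    thus ?thesis by simp
  qed
  have "(\<Sum>i\<in>I. \<Sum>j\<in>I. (w i j + w j i) * (v j * v i)) = W + (\<Sum>i\<in>I. \<Sum>j\<in>I. w j i * v j * v i)"
    unfolding W_def by (simp add: sum.distrib distrib_right mult.assoc)
  hence "2 * W = (\<Sum>i\<in>I. \<Sum>j\<in>I. (w i j + w j i) * (v j * v i))" using sw by simp
  also have "\<dots> \<le> (\<Sum>i\<in>I. \<Sum>j\<in>I. (w i j + w j i) * ((v i)^2 + (v j)^2) / 2)"
    using pt by (intro sum_mono) auto
  also have "\<dots> = ((\<Sum>i\<in>I. \<Sum>j\<in>I. w i j * (v i)^2) + (\<Sum>i\<in>I. \<Sum>j\<in>I. w j i * (v i)^2)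
      + (\<Sum>i\<in>I. \<Sum>j\<in>I. w i j * (v j)^2) + (\<Sum>i\<in>I. \<Sum>j\<in>I. w j i * (v j)^2)) / 2"
    by (simp add: sum.distrib[symmetric] sum_divide_distrib algebra_simps)
  also have "(\<Sum>i\<in>I. \<Sum>j\<in>I. w i j * (v j)^2) = (\<Sum>i\<in>I. \<Sum>j\<in>I. w j i * (v i)^2)"
    by (rule sum.swap)
  also have "(\<Sum>i\<in>I. \<Sum>j\<in>I. w j i * (v j)^2) = (\<Sum>i\<in>I. \<Sum>j\<in>I. w i j * (v i)^2)"
    by (rule sum.swap)
  also have "((\<Sum>i\<in>I. \<Sum>j\<in>I. w i j * (v i)^2) + (\<Sum>i\<in>I. \<Sum>j\<in>I. w j i * (v i)^2)
      + (\<Sum>i\<in>I. \<Sum>j\<in>I. w j i * (v i)^2) + (\<Sum>i\<in>I. \<Sum>j\<in>I. w i j * (v i)^2)) / 2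
      = (\<Sum>i\<in>I. (v i)^2 * ((\<Sum>j\<in>I. w i j) + (\<Sum>j\<in>I. w j i)))"
  proof -
    have A: "(\<Sum>i\<in>I. \<Sum>j\<in>I. w i j * (v i)^2) = (\<Sum>i\<in>I. (v i)^2 * (\<Sum>j\<in>I. w i j))"
      by (simp add: sum_distrib_right mult.commute)
    have B: "(\<Sum>i\<in>I. \<Sum>j\<in>I. w j i * (v i)^2) = (\<Sum>i\<in>I. (v i)^2 * (\<Sum>j\<in>I. w j i))"
      by (simp add: sum_distrib_right mult.commute)
    show ?thesis unfolding A B by (simp add: distrib_left sum.distrib)
  qed
  finally show ?thesis unfolding W_def by simp
qed



lemma omega_ge3: assumes "1 < b" "b < 2" "k \<ge> 3" shows "omega b k \<ge> 0"
proof (cases "k = 3")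
  case True then show ?thesis using omega_3 assms by simp
next
  case False
  then have "k = (k - 4) + 4" using assms by simp
  then show ?thesis using omega_ge4[OF assms(1,2), of "k - 4"] by simp
qed

lemma wf_lt: assumes "1 < b" "b < 2" "i < j" shows "wfm b i j + wfm b j i \<ge> 0"
proof (cases "j = i + 1")
  case True
  then have "wfm b i j = omega b 0" "wfm b j i = omega b 2" by (auto simp: wfm_def)
  then show ?thesis using omega_02[OF assms(1,2)] by simp
next
  case False
  then have "wfm b i j = 0" "wfm b j i = omega b (j + 1 - i)" using assms by (auto simp: wfm_def)
  moreover have "omega b (j + 1 - i) \<ge> 0" using False assms by (intro omega_ge3) auto
  ultimately show ?thesis by simp
qed

lemma wf_offdiag: assumes "1 < b" "b < 2" "i \<noteq> j" shows "wfm b i j + wfm b j i \<ge> 0"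
proof (cases "i < j")
  case True then show ?thesis using wf_lt[OF assms(1,2)] by blast
next
  case False
  then have "j < i" using assms by simp
  then show ?thesis using wf_lt[OF assms(1,2), of j i] by (simp add: add.commute)
qed

lemma mono_kap: assumes "1 < b" "b < 2" "1 \<le> m" "m \<le> N"
  shows "- kap b / real m powr b \<le> - kap b / real N powr b"
proof -
  have "real m powr b \<le> real N powr b" using assms by (intro powr_mono2) auto
  moreover have "real m powr b > 0" "real N powr b > 0" using assms by auto
  ultimately have "kap b / real N powr b \<le> kap b / real m powr b"
    using kap_pos[OF assms(1,2)] by (intro divide_left_mono) auto
  thus ?thesis by simp
qed

lemma Qs_1: "Qs b (Suc 0) = omega b 0 + omega b (Suc 0)" by (simp add: Qs_def)

lemma row_bound: assumes "1 < b" "b < 2" "N \<ge> 4" "1 \<le> i" "i \<le> N - 1"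
  shows "(\<Sum>j=1..N-1. wfm b i j) + (\<Sum>j=1..N-1. wfm b j i) \<le> - kap b / real N powr b"
proof -
  have QN1: "Qs b (N - 1) \<le> - kap b / real N powr b"
  proof -
    have n2: "N - 1 \<ge> 2" using assms by simp
    have q: "Qs b (N - 1) \<le> - kap b / real (N - 1) powr b" using Qs_upper[OF assms(1,2) n2] .
    have m: "- kap b / real (N - 1) powr b \<le> - kap b / real N powr b"
      using mono_kap[OF assms(1,2), of "N - 1" N] assms by simp
    show ?thesis using q m by linarith
  qed
  have o1: "omega b 1 \<le> 0" using omega_1[OF assms(1,2)] .
  consider "i = 1" | "i = N - 1" | "2 \<le> i \<and> i + 2 \<le> N" using assms by linarith
  then show ?thesis
  proof cases
    case 1
    have "(\<Sum>j=1..N-1. wfm b i j) = Qs b 1" using R_sum[of i N b] 1 assms by simp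
    moreover have "(\<Sum>j=1..N-1. wfm b j i) = Qs b (N - 1) - omega b 0" using C_first[of N b] 1 assms by simp
    ultimately show ?thesis using QN1 o1 by (simp add: Qs_1)
  next
    case 2
    have "(\<Sum>j=1..N-1. wfm b i j) = Qs b (N - 1) - omega b 0" using R_last[of N b] 2 assms by simp
    moreover have "(\<Sum>j=1..N-1. wfm b j i) = Qs b (N - (N - 1))" using C_sum[of i N b] 2 assms by simp
    moreover have "N - (N - 1) = 1" using assms by simp
    ultimately show ?thesis using QN1 o1 by (simp add: Qs_1)
  next
    case 3
    have "(\<Sum>j=1..N-1. wfm b i j) = Qs b i" using R_sum[of i N b] 3 by simp
    moreover have "(\<Sum>j=1..N-1. wfm b j i) = Qs b (N - i)" using C_sum[of i N b] 3 by simp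
    moreover have "Qs b i \<le> - kap b / real N powr b"
      using Qs_upper[OF assms(1,2), of i] mono_kap[OF assms(1,2), of i N] 3 by simp
    moreover have "Qs b (N - i) \<le> - kap b / real N powr b"
    proof -
      have n2: "N - i \<ge> 2" using 3 by linarith
      have q: "Qs b (N - i) \<le> - kap b / real (N - i) powr b" using Qs_upper[OF assms(1,2) n2] .
      have m: "- kap b / real (N - i) powr b \<le> - kap b / real N powr b"
        using mono_kap[OF assms(1,2), of "N - i" N] n2 by simp
      show ?thesis using q m by linarith
    qed
    moreover have "kap b / real N powr b \<ge> 0" using kap_pos[OF assms(1,2)] by simp
    ultimately show ?thesis by linarith
  qed
qed



lemma main_bound:
  fixes \<beta> a b \<gamma> Dp Dm :: real and N :: nat and v :: "nat \<Rightarrow> real"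
  assumes "1 < \<beta>" "\<beta> < 2" "a < b" "Dp \<ge> 0" "Dm \<ge> 0" "N \<ge> 5" "in_Vh N v"
  shows "grid_ip a b N (delta_h \<beta> \<gamma> Dp Dm a b N v) v
     \<le> - ((Dp + Dm) * kap \<beta> / (2 * (b - a) powr \<beta>)) * (mesh a b N * (\<Sum>i=1..N-1. (v i)^2))"
proof -
  define h where "h = mesh a b N"
  define I where "I = {1..N-1}"
  have hpos: "h > 0" using assms by (simp add: h_def mesh_def)
  have v0: "v 0 = 0" "v N = 0" using assms by (auto simp: in_Vh_def)
  define W where "W = (\<Sum>i\<in>I. \<Sum>j\<in>I. wfm \<beta> i j * v j * v i)"
  define S where "S = (\<Sum>i\<in>I. (v i)^2)"
  have dl: "delta_h \<beta> \<gamma> Dp Dm a b N v i * v i =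
      \<gamma> / (2 * h) * ((v (i + 1) - v (i - 1)) * v i)
      + Dp / h powr \<beta> * ((\<Sum>j\<in>I. wfm \<beta> i j * v j) * v i)
      + Dm / h powr \<beta> * ((\<Sum>j\<in>I. wfm \<beta> j i * v j) * v i)" if "i \<in> I" for i
  proof -
    have i: "1 \<le> i" "i \<le> N - 1" using that by (auto simp: I_def)
    show ?thesis
      unfolding delta_h_def Let_def h_def[symmetric] L_S1[OF v0 i] L_S2[OF v0 i] I_def
      by (simp add: algebra_simps diff_divide_distrib add_divide_distrib)
  qed
  have sumA: "(\<Sum>i\<in>I. (\<Sum>j\<in>I. wfm \<beta> i j * v j) * v i) = W"
    unfolding W_def by (simp add: sum_distrib_right)
  have sumB: "(\<Sum>i\<in>I. (\<Sum>j\<in>I. wfm \<beta> j i * v j) * v i) = W"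
  proof -
    have "(\<Sum>i\<in>I. (\<Sum>j\<in>I. wfm \<beta> j i * v j) * v i) = (\<Sum>i\<in>I. \<Sum>j\<in>I. wfm \<beta> j i * v j * v i)"
      by (simp add: sum_distrib_right)
    also have "\<dots> = (\<Sum>j\<in>I. \<Sum>i\<in>I. wfm \<beta> j i * v j * v i)" by (rule sum.swap)
    also have "\<dots> = W" unfolding W_def by (simp add: mult_ac)
    finally show ?thesis .
  qed
  have tel: "(\<Sum>i\<in>I. (v (i + 1) - v (i - 1)) * v i) = 0"
    unfolding I_def by (rule telescope) (use v0 assms in auto)
  have "(\<Sum>i\<in>I. delta_h \<beta> \<gamma> Dp Dm a b N v i * v i) =
      \<gamma> / (2 * h) * (\<Sum>i\<in>I. (v (i + 1) - v (i - 1)) * v i)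
      + Dp / h powr \<beta> * (\<Sum>i\<in>I. (\<Sum>j\<in>I. wfm \<beta> i j * v j) * v i)
      + Dm / h powr \<beta> * (\<Sum>i\<in>I. (\<Sum>j\<in>I. wfm \<beta> j i * v j) * v i)"
    using dl by (simp add: sum.distrib sum_distrib_left)
  also have "\<dots> = (Dp + Dm) / h powr \<beta> * W"
    unfolding tel sumA sumB by (simp add: add_divide_distrib distrib_right)
  finally have sd: "(\<Sum>i\<in>I. delta_h \<beta> \<gamma> Dp Dm a b N v i * v i) = (Dp + Dm) / h powr \<beta> * W" .
  have Wle: "W \<le> (\<Sum>i\<in>I. (v i)^2 * ((\<Sum>j\<in>I. wfm \<beta> i j) + (\<Sum>j\<in>I. wfm \<beta> j i))) / 2"
    unfolding W_def by (rule quad) (use wf_offdiag[OF assms(1,2)] in \<open>auto simp: I_def\<close>)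
  also have "\<dots> \<le> (\<Sum>i\<in>I. (v i)^2 * (- kap \<beta> / real N powr \<beta>)) / 2"
  proof -
    have "(v i)^2 * ((\<Sum>j\<in>I. wfm \<beta> i j) + (\<Sum>j\<in>I. wfm \<beta> j i)) \<le> (v i)^2 * (- kap \<beta> / real N powr \<beta>)"
      if "i \<in> I" for i
      using row_bound[OF assms(1,2), of N i] that assms by (intro mult_left_mono) (auto simp: I_def)
    thus ?thesis by (intro divide_right_mono sum_mono) auto
  qed
  also have "\<dots> = - (kap \<beta> / (2 * real N powr \<beta>)) * S"
    unfolding S_def by (simp add: sum_negf sum_divide_distrib sum_distrib_left mult.commute)
  finally have Wb: "W \<le> - (kap \<beta> / (2 * real N powr \<beta>)) * S" .
  have coef: "(Dp + Dm) / h powr \<beta> \<ge> 0" using assms by simp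
  have hN: "h powr \<beta> * real N powr \<beta> = (b - a) powr \<beta>"
  proof -
    have "h * real N = b - a" using assms by (simp add: h_def mesh_def)
    thus ?thesis using hpos assms by (simp add: powr_mult[symmetric])
  qed
  have "grid_ip a b N (delta_h \<beta> \<gamma> Dp Dm a b N v) v = h * ((Dp + Dm) / h powr \<beta> * W)"
    unfolding grid_ip_def h_def[symmetric] I_def[symmetric] sd ..
  also have "\<dots> \<le> h * ((Dp + Dm) / h powr \<beta> * (- (kap \<beta> / (2 * real N powr \<beta>)) * S))"
    using Wb coef hpos by (intro mult_left_mono) auto
  also have "\<dots> = - ((Dp + Dm) * kap \<beta> / (2 * (h powr \<beta> * real N powr \<beta>))) * (h * S)"
    by (simp add: field_simps)
  also have "\<dots> = - ((Dp + Dm) * kap \<beta> / (2 * (b - a) powr \<beta>)) * (mesh a b N * (\<Sum>i=1..N-1. (v i)^2))"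
    unfolding hN by (simp add: S_def I_def h_def)
  finally show ?thesis .
qed


theorem theorem1:
  fixes \<beta> a b \<gamma> Dp Dm :: real
  assumes "1 < \<beta>" "\<beta> < 2" "a < b" "Dp \<ge> 0" "Dm \<ge> 0" "Dp + Dm > 0"
  shows "\<exists>c > 0. \<forall>N \<ge> 5. \<forall>v. in_Vh N v \<longrightarrow>
           grid_ip a b N (delta_h \<beta> \<gamma> Dp Dm a b N v) v \<le> - c * ln 2 * (grid_norm a b N v)^2"
proof -
  define c where "c = (Dp + Dm) * kap \<beta> / (2 * (b - a) powr \<beta> * ln 2)"
  have cpos: "c > 0" unfolding c_def using assms kap_pos[OF assms(1,2)] by simp
  have "\<forall>N \<ge> 5. \<forall>v. in_Vh N v \<longrightarrow>
           grid_ip a b N (delta_h \<beta> \<gamma> Dp Dm a b N v) v \<le> - c * ln 2 * (grid_norm a b N v)^2"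
  proof (intro allI impI)
    fix N :: nat and v :: "nat \<Rightarrow> real"
    assume N: "N \<ge> 5" and v: "in_Vh N v"
    have nn: "mesh a b N * (\<Sum>i=1..N-1. (v i)^2) \<ge> 0"
      using assms N by (intro mult_nonneg_nonneg sum_nonneg) (auto simp: mesh_def)
    have gn: "(grid_norm a b N v)^2 = mesh a b N * (\<Sum>i=1..N-1. (v i)^2)"
      unfolding grid_norm_def grid_ip_def using nn by (simp add: power2_eq_square)
    have "- c * ln 2 * (grid_norm a b N v)^2
        = - ((Dp + Dm) * kap \<beta> / (2 * (b - a) powr \<beta>)) * (mesh a b N * (\<Sum>i=1..N-1. (v i)^2))"
      unfolding gn c_def by simp
    thus "grid_ip a b N (delta_h \<beta> \<gamma> Dp Dm a b N v) v \<le> - c * ln 2 * (grid_norm a b N v)^2"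
      using main_bound[OF assms(1-5) N v] by simp
  qed
  thus ?thesis using cpos by blast
qed

end
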